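(* Let $n$ be a positive integer and $q=p^k$ a prime power with $k\ge2$. Then there are at least $p^k(p-1)^k/2^k-q$ intervals $L\subseteq[q-1]$ such that every $q$-modular $L$-differencing Sperner system $\mathcal{F}\subseteq2^{[n]}$ satisfies $$|\mathcal{F}|\le\sum_{i=0}^{|L|}\binom{n-1}{i}.$$
   Context: An interval is a nonempty set of consecutive integers. For $L\subseteq[q-1]$, $\mathcal{F}\subseteq2^{[n]}$ is $q$-modular $L$-differencing Sperner if for all distinct $A,B\in\mathcal{F}$, $|A\setminus B|\equiv\ell\pmod q$ for some $\ell\in L$. *)

theory Defs
  imports Complex_Main "HOL-Computational_Algebra.Primes"
begin

text \<open>An interval is a nonempty set of consecutive integers (here natural numbers,
  since all intervals considered lie in [q-1] = {1..q-1}).\<close>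
definition is_interval :: "nat set \<Rightarrow> bool" where
  "is_interval L \<longleftrightarrow> (\<exists>a b. a \<le> b \<and> L = {a..b})"

definition modular_L_differencing_Sperner ::
  "nat \<Rightarrow> nat set \<Rightarrow> nat set set \<Rightarrow> bool" where
  "modular_L_differencing_Sperner q L F \<longleftrightarrow>
     (\<forall>A\<in>F. \<forall>B\<in>F. A \<noteq> B \<longrightarrow> (\<exists>l\<in>L. card (A - B) mod q = l mod q))"

end

theory Submission
  imports Defs "Jordan_Normal_Form.Determinant"
begin


lemma dvd_choose_mult:
  fixes p k t j :: nat
  assumes pr: "prime p" and j: "0 < j" "j < p ^ k"
  shows "p dvd ((p ^ k * t) choose j)"
proof (rule ccontr)
  assume nd: "\<not> p dvd ((p ^ k * t) choose j)"
  have "j * ((p ^ k * t) choose j) = (p ^ k * t) * ((p ^ k * t - 1) choose (j - 1))"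
    using j(1) by (rule times_binomial_minus1_eq)
  hence "p ^ k dvd j * ((p ^ k * t) choose j)" by (metis dvd_mult2 dvd_triv_left)
  moreover have "coprime (p ^ k) ((p ^ k * t) choose j)"
    using nd pr by (simp add: prime_imp_coprime)
  ultimately have "p ^ k dvd j" using coprime_dvd_mult_left_iff by blast
  thus False using j by (meson nat_dvd_not_less)
qed

lemma dvd_choose_small_mod:
  fixes p k x d :: nat
  assumes pr: "prime p" and xd: "x mod (p ^ k) < d" and dq: "d < p ^ k"
  shows "p dvd (x choose d)"
proof -
  let ?q = "p ^ k"
  define t r where "t = x div ?q" and "r = x mod ?q"
  have x: "x = ?q * t + r" unfolding t_def r_def by simp
  have "(x choose d) = (\<Sum>j\<le>d. ((?q * t) choose j) * (r choose (d - j)))"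
    unfolding x by (rule vandermonde[symmetric])
  also have "p dvd \<dots>"
  proof (rule dvd_sum)
    fix j assume "j \<in> {..d}"
    hence jd: "j \<le> d" by simp
    show "p dvd ((?q * t) choose j) * (r choose (d - j))"
    proof (cases "j = 0")
      case True
      hence "r choose (d - j) = 0" using xd r_def by simp
      thus ?thesis by (metis dvd_0_right mult_0_right)
    next
      case False
      hence "p dvd ((?q * t) choose j)" using dvd_choose_mult[OF pr, of j k t] jd dq by simp
      thus ?thesis by simp
    qed
  qed
  finally show ?thesis .
qed

lemma choose_p_mod:
  fixes p i :: nat
  assumes pr: "prime p" and "i \<le> p"
  shows "(p choose i) mod p = (if i = 0 \<or> i = p then 1 else 0)"
proof -
  have p1: "p > 1" using pr prime_gt_1_nat by blast
  show ?thesis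
  proof (cases "i = 0 \<or> i = p")
    case True thus ?thesis using p1 by auto
  next
    case False
    hence "p dvd (p choose i)" using assms dvd_choose_prime by auto
    thus ?thesis using False by simp
  qed
qed

lemma choose_mult_p_mod:
  fixes p s j :: nat
  assumes pr: "prime p"
  shows "((p * s) choose j) mod p = (if p dvd j then (s choose (j div p)) else 0) mod p"
proof (induction s arbitrary: j)
  case 0
  have p0: "p > 0" using pr prime_gt_0_nat by blast
  show ?case
  proof (cases "j = 0")
    case False
    show ?thesis
    proof (cases "p dvd j")
      case True
      then obtain c where c: "j = p * c" by blast
      hence "c > 0" using False by auto
      thus ?thesis using c p0 by (simp add: binomial_eq_0)
    qed (use False in \<open>auto simp: binomial_eq_0\<close>)
  qed auto
next
  case (Suc s)
  have p0: "p > 0" using pr prime_gt_0_nat by blast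
  have "(p * Suc s) choose j = (\<Sum>i\<le>j. ((p * s) choose i) * (p choose (j - i)))"
    using vandermonde[where r=j and m="p*s" and n=p] by (simp add: add.commute)
  hence "((p * Suc s) choose j) mod p = (\<Sum>i\<le>j. ((p * s) choose i) * (p choose (j - i))) mod p"
    by simp
  also have "\<dots> = (\<Sum>i\<le>j. ((p * s) choose i) * (p choose (j - i)) mod p) mod p"
    by (rule mod_sum_eq[symmetric])
  also have "(\<Sum>i\<le>j. ((p * s) choose i) * (p choose (j - i)) mod p)
     = (\<Sum>i\<le>j. ((p * s) choose i) * ((p choose (j - i)) mod p) mod p)"
    by (rule sum.cong[OF refl]) (rule mod_mult_right_eq[symmetric])
  also have "(\<Sum>i\<le>j. ((p * s) choose i) * ((p choose (j - i)) mod p) mod p) mod p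
     = (\<Sum>i\<le>j. ((p * s) choose i) * ((p choose (j - i)) mod p)) mod p"
    by (rule mod_sum_eq)
  also have "(\<Sum>i\<le>j. ((p * s) choose i) * ((p choose (j - i)) mod p))
      = (\<Sum>i\<le>j. if i = j \<or> (p \<le> j \<and> i = j - p) then (p * s) choose i else 0)"
  proof (rule sum.cong[OF refl])
    fix i assume "i \<in> {..j}"
    hence ij: "i \<le> j" by simp
    show "((p * s) choose i) * ((p choose (j - i)) mod p) =
        (if i = j \<or> (p \<le> j \<and> i = j - p) then (p * s) choose i else 0)"
    proof (cases "j - i \<le> p")
      case True
      thus ?thesis using choose_p_mod[OF pr True] ij by auto
    next
      case False
      hence z: "p choose (j - i) = 0" by (simp add: binomial_eq_0)
      have "\<not> (i = j \<or> (p \<le> j \<and> i = j - p))" using False ij by auto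
      thus ?thesis by (simp only: z if_False) simp
    qed
  qed
  also have "\<dots> = ((p * s) choose j) + (if p \<le> j then (p * s) choose (j - p) else 0)"
  proof -
    have "(\<Sum>i\<le>j. if i = j \<or> (p \<le> j \<and> i = j - p) then (p * s) choose i else 0)
       = (\<Sum>i\<le>j. (if i = j then (p * s) choose i else 0) + (if p \<le> j \<and> i = j - p then (p * s) choose i else 0))"
      by (rule sum.cong) (use p0 in auto)
    also have "\<dots> = ((p * s) choose j) + (if p \<le> j then (p * s) choose (j - p) else 0)"
      by (simp add: sum.distrib)
    finally show ?thesis .
  qed
  finally have eq: "((p * Suc s) choose j) mod p =
      (((p * s) choose j) + (if p \<le> j then (p * s) choose (j - p) else 0)) mod p" .
  show ?case
  proof (cases "p \<le> j")
    case True
    have "((p * Suc s) choose j) mod p = (((p * s) choose j) mod p + ((p * s) choose (j - p)) mod p) mod p"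
      using eq True by (simp add: mod_add_eq)
    also have "\<dots> = ((if p dvd j then (s choose (j div p)) else 0) mod p
          + (if p dvd (j - p) then (s choose ((j - p) div p)) else 0) mod p) mod p"
      using Suc.IH[of j] Suc.IH[of "j - p"] by simp
    also have "\<dots> = (if p dvd j then (Suc s choose (j div p)) else 0) mod p"
    proof (cases "p dvd j")
      case True
      then obtain c where c: "j = p * c" by blast
      have c1: "c \<ge> 1" using \<open>p \<le> j\<close> c p0 by (cases c) auto
      have jp: "j - p = p * (c - 1)" using c c1 by (simp add: diff_mult_distrib2)
      obtain c' where c': "c = Suc c'" using c1 by (cases c) auto
      have "Suc s choose c = (s choose c) + (s choose (c - 1))"
        unfolding c' by simp
      thus ?thesis using True c jp p0 by (simp add: mod_add_eq)
    next
      case False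
      have "\<not> p dvd (j - p)"
      proof
        assume "p dvd (j - p)"
        hence "p dvd (j - p + p)" by simp
        thus False using False \<open>p \<le> j\<close> by simp
      qed
      thus ?thesis using False by simp
    qed
    finally show ?thesis .
  next
    case False
    hence "j div p = 0 \<or> \<not> p dvd j" using p0 by auto
    have "\<not> p dvd j \<or> j = 0" using False by (cases "j = 0") (auto dest: dvd_imp_le)
    thus ?thesis using eq False Suc.IH[of j] by auto
  qed
qed



lemma lucas_step:
  fixes p s s0 d d0 :: nat
  assumes pr: "prime p" and s0: "s0 < p" and d0: "d0 < p"
  shows "((p * s + s0) choose (p * d + d0)) mod p = ((s choose d) * (s0 choose d0)) mod p"
proof -
  have p0: "p > 0" using pr prime_gt_0_nat by blast
  let ?r = "p * d + d0"
  let ?f = "\<lambda>i. ((p * s) choose i) * (s0 choose (?r - i))"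
  let ?g = "\<lambda>i. if i = p * d then (s choose d) * (s0 choose d0) else 0"
  have "(p * s + s0) choose ?r = (\<Sum>i\<le>?r. ?f i)"
    using vandermonde[where r="?r" and m="p*s" and n=s0] by simp
  hence "((p * s + s0) choose ?r) mod p = (\<Sum>i\<le>?r. ?f i mod p) mod p"
    by (simp add: mod_sum_eq)
  also have "(\<Sum>i\<le>?r. ?f i mod p) = (\<Sum>i\<le>?r. ?g i mod p)"
  proof (rule sum.cong[OF refl])
    fix i assume "i \<in> {..?r}"
    hence ir: "i \<le> ?r" by simp
    have "?f i mod p = (((p * s) choose i) mod p * (s0 choose (?r - i))) mod p"
      by (simp add: mod_mult_left_eq)
    also have "\<dots> = ((if p dvd i then (s choose (i div p)) else 0) mod p * (s0 choose (?r - i))) mod p"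
      using choose_mult_p_mod[OF pr] by simp
    also have "\<dots> = ?g i mod p"
    proof (cases "p dvd i")
      case False
      hence "i \<noteq> p * d" by auto
      thus ?thesis using False by simp
    next
      case True
      then obtain c where c: "i = p * c" by blast
      show ?thesis
      proof (cases "c = d")
        case True thus ?thesis using c p0 by (simp add: mod_mult_left_eq)
      next
        case False
        have "p * c < p * (d + 1)" using ir c d0 by simp
        hence "c < d + 1" using mult_less_cancel1[of p c "d+1"] by linarith
        hence "c \<le> d" by simp
        hence cd: "c < d" using False by simp
        have "?r - i = p * (d - c) + d0" using c cd by (simp add: diff_mult_distrib2)
        moreover have "p * (d - c) \<ge> p * 1" using cd by (intro mult_le_mono2) simp
        ultimately have "?r - i > s0" using s0 by linarith
        hence z: "s0 choose (?r - i) = 0" by (simp add: binomial_eq_0)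
        have ne: "i \<noteq> p * d" using c False p0 by simp
        show ?thesis by (subst z) (simp add: ne)
      qed
    qed
    finally show "?f i mod p = ?g i mod p" .
  qed
  also have "(\<Sum>i\<le>?r. ?g i mod p) mod p = (\<Sum>i\<le>?r. ?g i) mod p"
    by (simp add: mod_sum_eq)
  also have "(\<Sum>i\<le>?r. ?g i) = (s choose d) * (s0 choose d0)"
    by (simp add: sum.delta)
  finally show ?thesis .
qed

lemma not_dvd_choose_small:
  fixes p s0 d0 :: nat
  assumes pr: "prime p" and "d0 \<le> s0" "s0 < p"
  shows "\<not> p dvd (s0 choose d0)"
proof
  assume "p dvd (s0 choose d0)"
  moreover have "(s0 choose d0) dvd fact s0"
    using assms(2) by (metis binomial_fact_lemma dvd_triv_right mult.assoc)
  ultimately have "p dvd fact s0" by (rule dvd_trans)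
  thus False using assms prime_dvd_fact_iff by auto
qed

lemma lucas_nonzero:
  fixes p s s0 d d0 :: nat
  assumes pr: "prime p" and nd: "\<not> p dvd (s choose d)" and "d0 \<le> s0" "s0 < p"
  shows "\<not> p dvd ((p * s + s0) choose (p * d + d0))"
proof -
  have "\<not> p dvd (s0 choose d0)" using not_dvd_choose_small assms by blast
  hence "\<not> p dvd ((s choose d) * (s0 choose d0))" using nd pr by (simp add: prime_dvd_mult_iff)
  moreover have "((p * s + s0) choose (p * d + d0)) mod p = ((s choose d) * (s0 choose d0)) mod p"
    using lucas_step[OF pr] assms by simp
  ultimately show ?thesis by (simp add: mod_eq_0_iff_dvd[symmetric])
qed



definition Good :: "nat \<Rightarrow> nat \<Rightarrow> (nat \<times> nat) set" where
  "Good p j = {(s,d). s < p ^ j \<and> \<not> p dvd (s choose d)}"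

definition Dig :: "nat \<Rightarrow> (nat \<times> nat) set" where
  "Dig p = {(s,d). d < s \<and> s < p}"

lemma Good_sub: "Good p j \<subseteq> {..<p^j} \<times> {..<p^j}"
proof
  fix x assume x: "x \<in> Good p j"
  obtain s d where sd: "x = (s,d)" by (cases x)
  have "d \<le> s"
  proof (rule ccontr)
    assume "\<not> d \<le> s"
    hence h: "s choose d = 0" by (simp add: binomial_eq_0)
    have "\<not> p dvd (s choose d)" using x sd unfolding Good_def by auto
    thus False using h by simp
  qed
  thus "x \<in> {..<p^j} \<times> {..<p^j}" using x sd unfolding Good_def by auto
qed

lemma Good_finite: "finite (Good p j)"
  by (rule finite_subset[OF Good_sub]) auto

lemma Dig_eq: "Dig p = Sigma {0..<p} (\<lambda>s. {0..<s})"
  unfolding Dig_def by auto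

lemma card_Dig: "2 * card (Dig p) = p * (p - 1)"
proof -
  have "card (Dig p) = (\<Sum>s\<in>{0..<p}. s)" unfolding Dig_eq by (simp add: card_SigmaI)
  moreover have "2 * (\<Sum>s\<in>{0..<p}. s) = p * (p - 1)"
  proof (cases p)
    case 0 thus ?thesis by simp
  next
    case (Suc m)
    have "{0..<p} = {0..m}" using Suc by auto
    hence "2 * (\<Sum>s\<in>{0..<p}. s) = 2 * (\<Sum>s\<in>{0..m}. s)" by simp
    also have "\<dots> = m * (m + 1)" using double_gauss_sum[of m, where 'a=nat] by simp
    finally show ?thesis using Suc by simp
  qed
  ultimately show ?thesis by simp
qed

lemma card_Good:
  assumes pr: "prime p"
  shows "card (Dig p) ^ j \<le> card (Good p j)"
proof (induction j)
  case 0
  have "(0,0) \<in> Good p 0" using pr unfolding Good_def by (auto simp: prime_gt_1_nat)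
  hence "1 \<le> card (Good p 0)" using Good_finite by (metis One_nat_def Suc_leI card_gt_0_iff empty_iff)
  thus ?case by simp
next
  case (Suc j)
  have p0: "p > 0" using pr prime_gt_0_nat by blast
  let ?\<phi> = "\<lambda>((s,d),(s0,d0)). (p * s + s0, p * d + d0)"
  have inj: "inj_on ?\<phi> (Good p j \<times> Dig p)"
  proof (rule inj_onI)
    fix x y assume x: "x \<in> Good p j \<times> Dig p" and y: "y \<in> Good p j \<times> Dig p" and e: "?\<phi> x = ?\<phi> y"
    obtain s d s0 d0 where xx: "x = ((s,d),(s0,d0))" by (metis prod.collapse)
    obtain t e' t0 e0 where yy: "y = ((t,e'),(t0,e0))" by (metis prod.collapse)
    have b: "s0 < p" "d0 < p" "t0 < p" "e0 < p" using x y xx yy unfolding Dig_def by auto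
    have e1: "p * s + s0 = p * t + t0" and e2: "p * d + d0 = p * e' + e0" using e xx yy by auto
    have "s0 = t0" using e1 b by (metis mod_mult_self3 mod_less mult.commute)
    moreover have "s = t" using e1 b p0 calculation by simp
    moreover have "d0 = e0" using e2 b by (metis mod_mult_self3 mod_less mult.commute)
    moreover have "d = e'" using e2 b p0 calculation by simp
    ultimately show "x = y" using xx yy by simp
  qed
  have sub: "?\<phi> ` (Good p j \<times> Dig p) \<subseteq> Good p (Suc j)"
  proof
    fix z assume "z \<in> ?\<phi> ` (Good p j \<times> Dig p)"
    then obtain s d s0 d0 where g: "(s,d) \<in> Good p j" and dg: "(s0,d0) \<in> Dig p"
      and z: "z = (p * s + s0, p * d + d0)" by auto
    have ss: "s < p ^ j" and nd: "\<not> p dvd (s choose d)" using g unfolding Good_def by auto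
    have b: "d0 < s0" "s0 < p" using dg unfolding Dig_def by auto
    have "\<not> p dvd ((p * s + s0) choose (p * d + d0))"
      using lucas_nonzero[OF pr nd, of d0 s0] b by simp
    moreover have "p * s + s0 < p ^ Suc j"
    proof -
      have "s + 1 \<le> p ^ j" using ss by simp
      hence "p * (s + 1) \<le> p * p ^ j" by (rule mult_le_mono2)
      thus ?thesis using b by simp
    qed
    ultimately show "z \<in> Good p (Suc j)" unfolding Good_def z by simp
  qed
  have "card (Dig p) ^ Suc j = card (Dig p) ^ j * card (Dig p)" by simp
  also have "\<dots> \<le> card (Good p j) * card (Dig p)" using Suc.IH by simp
  also have "\<dots> = card (Good p j \<times> Dig p)" by (simp add: card_cartesian_product)
  also have "\<dots> = card (?\<phi> ` (Good p j \<times> Dig p))" using card_image[OF inj] by simp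
  also have "\<dots> \<le> card (Good p (Suc j))" by (rule card_mono[OF Good_finite sub])
  finally show ?case .
qed



lemma det_nonzero_modp:
  fixes M :: "int mat" and p :: int
  assumes M: "M \<in> carrier_mat m m" and pr: "prime p"
   and off: "\<And>i j. i < m \<Longrightarrow> j < m \<Longrightarrow> i \<noteq> j \<Longrightarrow> \<not> (P i \<and> \<not> P j) \<Longrightarrow> p dvd M $$ (i,j)"
   and diag: "\<And>i. i < m \<Longrightarrow> \<not> p dvd M $$ (i,i)"
  shows "det M \<noteq> 0"
proof
  assume d0: "det M = 0"
  let ?U = "{0..<m}"
  let ?T = "\<lambda>\<sigma>. signof \<sigma> * (\<Prod>i = 0..<m. M $$ (i, \<sigma> i))"
  have trm: "p dvd ?T \<sigma>" if s: "\<sigma> permutes ?U" and ne: "\<sigma> \<noteq> id" for \<sigma>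
  proof -
    obtain i where i: "\<sigma> i \<noteq> i" using ne by (auto simp: fun_eq_iff)
    have im: "i < m" using s i by (meson atLeastLessThan_iff permutes_not_in zero_le)
    define j where "j = \<sigma> i"
    have jm: "j < m" using s im j_def by (simp add: permutes_in_image)
    have jj: "\<sigma> j \<noteq> j" proof assume "\<sigma> j = j" hence "\<sigma> j = \<sigma> i" using j_def by simp hence "j = i" using permutes_inj[OF s] by (simp add: inj_eq) thus False using i j_def by simp qed
    have "\<exists>l\<in>?U. p dvd M $$ (l, \<sigma> l)"
    proof (rule ccontr)
      assume "\<not> ?thesis"
      hence a: "\<not> p dvd M $$ (i, \<sigma> i)" "\<not> p dvd M $$ (j, \<sigma> j)" using im jm by auto
      have sj: "\<sigma> j < m" using s jm by (simp add: permutes_in_image)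
      have "P i \<and> \<not> P j" using off[OF im jm] a(1) i unfolding j_def by (metis (no_types))
      moreover have "P j \<and> \<not> P (\<sigma> j)" using off[OF jm sj] a(2) jj by auto
      ultimately show False by blast
    qed
    then obtain l where "l \<in> ?U" "p dvd M $$ (l, \<sigma> l)" by blast
    hence "p dvd (\<Prod>i = 0..<m. M $$ (i, \<sigma> i))"
      by (meson dvd_prod finite_atLeastLessThan)
    thus ?thesis by simp
  qed
  have idp: "id permutes ?U" by (simp add: permutes_id)
  have "det M = (\<Sum>\<sigma>\<in>{\<sigma>. \<sigma> permutes ?U}. ?T \<sigma>)" by (rule det_def'[OF M])
  also have "\<dots> = ?T id + (\<Sum>\<sigma>\<in>{\<sigma>. \<sigma> permutes ?U} - {id}. ?T \<sigma>)"
    using idp by (subst sum.remove[of _ id]) (auto simp: finite_permutations)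
  finally have eq: "det M = ?T id + (\<Sum>\<sigma>\<in>{\<sigma>. \<sigma> permutes ?U} - {id}. ?T \<sigma>)" .
  have dv: "p dvd (\<Sum>\<sigma>\<in>{\<sigma>. \<sigma> permutes ?U} - {id}. ?T \<sigma>)"
    by (rule dvd_sum) (use trm in auto)
  have "?T id = - (\<Sum>\<sigma>\<in>{\<sigma>. \<sigma> permutes ?U} - {id}. ?T \<sigma>)" using eq d0 by linarith
  hence "p dvd ?T id" using dv by (simp only: dvd_minus_iff)
  hence "p dvd (\<Prod>i = 0..<m. M $$ (i, i))" by (simp add: sign_id)
  then obtain i where "i \<in> ?U" "p dvd M $$ (i,i)"
    using prime_dvd_prod_iff[OF finite_atLeastLessThan[of 0 m] pr, of "\<lambda>i. M $$ (i,i)"] by blast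
  thus False using diag by auto
qed



lemma choose_expand:
  fixes Y U :: "nat set" and s d :: nat
  assumes U: "finite U" and YU: "Y \<subseteq> U"
  shows "(card Y + s) choose d =
    (\<Sum>S\<in>{S. S \<subseteq> U \<and> card S \<le> d}. if S \<subseteq> Y then s choose (d - card S) else 0)"
proof -
  have fY: "finite Y" using U YU finite_subset by blast
  have fin: "finite {S. S \<subseteq> U \<and> card S \<le> d}" using U by simp
  have "(\<Sum>S\<in>{S. S \<subseteq> U \<and> card S \<le> d}. if S \<subseteq> Y then s choose (d - card S) else 0)
      = (\<Sum>S\<in>{S \<in> {S. S \<subseteq> U \<and> card S \<le> d}. S \<subseteq> Y}. s choose (d - card S))"
    using sum.inter_filter[OF fin, of "\<lambda>S. s choose (d - card S)" "\<lambda>S. S \<subseteq> Y"] by simp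
  also have "{S \<in> {S. S \<subseteq> U \<and> card S \<le> d}. S \<subseteq> Y} = (\<Union>j\<in>{..d}. {S. S \<subseteq> Y \<and> card S = j})"
    using YU by auto
  also have "(\<Sum>S\<in>(\<Union>j\<in>{..d}. {S. S \<subseteq> Y \<and> card S = j}). s choose (d - card S))
      = (\<Sum>j\<le>d. (\<Sum>S\<in>{S. S \<subseteq> Y \<and> card S = j}. s choose (d - card S)))"
    by (rule sum.UNION_disjoint) (use fY in auto)
  also have "\<dots> = (\<Sum>j\<le>d. (card Y choose j) * (s choose (d - j)))"
  proof (rule sum.cong[OF refl])
    fix j assume "j \<in> {..d}"
    have "(\<Sum>S\<in>{S. S \<subseteq> Y \<and> card S = j}. s choose (d - card S))
        = (\<Sum>S\<in>{S. S \<subseteq> Y \<and> card S = j}. s choose (d - j))" by (rule sum.cong) auto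
    also have "\<dots> = card {S. S \<subseteq> Y \<and> card S = j} * (s choose (d - j))" by simp
    also have "\<dots> = (card Y choose j) * (s choose (d - j))" using n_subsets[OF fY] by simp
    finally show "(\<Sum>S\<in>{S. S \<subseteq> Y \<and> card S = j}. s choose (d - card S)) = (card Y choose j) * (s choose (d - j))" .
  qed
  also have "\<dots> = (card Y + s) choose d" by (rule vandermonde)
  finally show ?thesis by simp
qed

lemma card_small_subsets:
  assumes "finite U"
  shows "card {S. S \<subseteq> U \<and> card S \<le> d} = (\<Sum>i=0..d. card U choose i)"
proof -
  have "{S. S \<subseteq> U \<and> card S \<le> d} = (\<Union>i\<in>{0..d}. {S. S \<subseteq> U \<and> card S = i})" by auto
  hence "card {S. S \<subseteq> U \<and> card S \<le> d} = (\<Sum>i\<in>{0..d}. card {S. S \<subseteq> U \<and> card S = i})"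
    by (simp only:, subst card_UN_disjoint) (use assms in auto)
  also have "\<dots> = (\<Sum>i=0..d. card U choose i)" using n_subsets[OF assms] by simp
  finally show ?thesis .
qed



lemma core:
  fixes p k n s d :: nat and F :: "nat set set"
  assumes pr: "prime p" and n0: "n > 0" and Fsub: "F \<subseteq> Pow {1..n}"
    and hz: "\<And>A B. A \<in> F \<Longrightarrow> B \<in> F \<Longrightarrow> A \<noteq> B \<Longrightarrow> (card (A - B) + s) mod p ^ k < d"
    and dq: "d < p ^ k" and nd: "\<not> p dvd (s choose d)"
  shows "card F \<le> (\<Sum>i=0..d. (n - 1) choose i)"
proof (rule ccontr)
  assume "\<not> ?thesis"
  hence lt: "(\<Sum>i=0..d. (n - 1) choose i) < card F" by simp
  define U where "U = {1..n-1}"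
  define SS where "SS = {S. S \<subseteq> U \<and> card S \<le> d}"
  define N where "N = card SS"
  define m where "m = card F"
  have fU: "finite U" unfolding U_def by simp
  have cU: "card U = n - 1" unfolding U_def by simp
  have NN: "N = (\<Sum>i=0..d. (n - 1) choose i)"
    unfolding N_def SS_def using card_small_subsets[OF fU] cU by simp
  have Nm: "N < m" using lt NN m_def by simp
  have finF: "finite F" using Fsub finite_subset by (metis finite_Pow_iff finite_atLeastAtMost)
  obtain f where f: "bij_betw f {0..<m} F" using ex_bij_betw_nat_finite[OF finF] m_def by blast
  have finSS: "finite SS" unfolding SS_def using fU by simp
  obtain h where h: "bij_betw h {0..<N} SS" using ex_bij_betw_nat_finite[OF finSS] N_def by blast
  have fi: "f i \<in> F" if "i < m" for i using f that by (auto simp: bij_betw_def)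
  have finj: "f i \<noteq> f j" if "i < m" "j < m" "i \<noteq> j" for i j
    using f that by (auto simp: bij_betw_def inj_on_def)
  have hU: "h t \<subseteq> U" if "t < N" for t using h that unfolding SS_def by (auto simp: bij_betw_def)
  define M :: "int mat" where "M = mat m m (\<lambda>(i,j). int ((card ((f i - {n}) - f j) + s) choose d))"
  define Cm :: "int mat" where "Cm = mat m m (\<lambda>(i,t). if t < N \<and> h t \<subseteq> f i then int (s choose (d - card (h t))) else 0)"
  define Em :: "int mat" where "Em = mat m m (\<lambda>(t,j). if t < N \<and> h t \<inter> f j = {} then 1 else 0)"
  have Mc: "M \<in> carrier_mat m m" unfolding M_def by simp
  have Cc: "Cm \<in> carrier_mat m m" unfolding Cm_def by simp
  have Ec: "Em \<in> carrier_mat m m" unfolding Em_def by simp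
  have MCE: "M = Cm * Em"
  proof (rule eq_matI)
    fix i j assume i: "i < dim_row (Cm * Em)" and j: "j < dim_col (Cm * Em)"
    hence i: "i < m" and j: "j < m" using Cc Ec by auto
    define Y where "Y = (f i - {n}) - f j"
    have fin: "f i \<subseteq> {1..n}" using fi[OF i] Fsub by auto
    have YU: "Y \<subseteq> U" unfolding Y_def U_def
    proof
      fix x assume "x \<in> f i - {n} - f j"
      hence "x \<in> {1..n}" "x \<noteq> n" using fin by auto
      thus "x \<in> {1..n-1}" by auto
    qed
    have "(Cm * Em) $$ (i,j) = (\<Sum>t\<in>{0..<m}. Cm $$ (i,t) * Em $$ (t,j))"
      using i j Cc Ec by (simp add: scalar_prod_def)
    also have "\<dots> = (\<Sum>t\<in>{0..<m}. if t < N \<and> h t \<subseteq> f i \<and> h t \<inter> f j = {} then int (s choose (d - card (h t))) else 0)"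
      by (rule sum.cong) (auto simp: Cm_def Em_def i j)
    also have "\<dots> = (\<Sum>t\<in>{0..<N}. if h t \<subseteq> f i \<and> h t \<inter> f j = {} then int (s choose (d - card (h t))) else 0)"
    proof -
      have "{0..<m} = {0..<N} \<union> {N..<m}" using Nm by auto
      thus ?thesis by (simp add: sum.union_disjoint)
    qed
    also have "\<dots> = (\<Sum>S\<in>SS. if S \<subseteq> f i \<and> S \<inter> f j = {} then int (s choose (d - card S)) else 0)"
      using sum.reindex_bij_betw[OF h, of "\<lambda>S. if S \<subseteq> f i \<and> S \<inter> f j = {} then int (s choose (d - card S)) else 0"] by simp
    also have "\<dots> = (\<Sum>S\<in>SS. if S \<subseteq> Y then int (s choose (d - card S)) else 0)"
    proof (rule sum.cong[OF refl])
      fix S assume "S \<in> SS"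
      hence "S \<subseteq> U" unfolding SS_def by simp
      hence "n \<notin> S"
      proof -
        assume SU: "S \<subseteq> U"
        show "n \<notin> S"
        proof
          assume "n \<in> S"
          hence "n \<in> {1..n-1}" using SU unfolding U_def by auto
          thus False using n0 by simp
        qed
      qed
      hence "(S \<subseteq> f i \<and> S \<inter> f j = {}) = (S \<subseteq> Y)" unfolding Y_def by auto
      thus "(if S \<subseteq> f i \<and> S \<inter> f j = {} then int (s choose (d - card S)) else 0) =
          (if S \<subseteq> Y then int (s choose (d - card S)) else 0)" by simp
    qed
    also have "\<dots> = int (\<Sum>S\<in>SS. if S \<subseteq> Y then s choose (d - card S) else 0)"
      by (simp add: of_nat_sum) (rule sum.cong, auto)
    also have "\<dots> = int ((card Y + s) choose d)"
      using choose_expand[OF fU YU, of s d] unfolding SS_def by simp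
    finally show "M $$ (i,j) = (Cm * Em) $$ (i,j)" using i j unfolding M_def Y_def by simp
  next
    show "dim_row M = dim_row (Cm * Em)" using Mc Cc by simp
  next
    show "dim_col M = dim_col (Cm * Em)" using Mc Ec by simp
  qed
  have dE: "det Em = 0"
  proof -
    have z: "signof \<sigma> * (\<Prod>i = 0..<m. Em $$ (i, \<sigma> i)) = 0" if s: "\<sigma> permutes {0..<m}" for \<sigma>
    proof -
      have m1: "m - 1 \<in> {0..<m}" "m - 1 \<ge> N" using Nm by auto
      have "\<sigma> (m - 1) < m" using s m1 permutes_in_image by fastforce
      hence "Em $$ (m - 1, \<sigma> (m - 1)) = 0" using m1 unfolding Em_def by auto
      hence "(\<Prod>i = 0..<m. Em $$ (i, \<sigma> i)) = 0" using m1 by (meson finite_atLeastLessThan prod_zero)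
      thus ?thesis by simp
    qed
    show ?thesis unfolding det_def'[OF Ec] by (rule sum.neutral) (use z in blast)
  qed
  have "det M = det Cm * det Em" unfolding MCE by (rule det_mult[OF Cc Ec])
  hence d0: "det M = 0" using dE by simp
  have prp: "prime (int p)" using pr by simp
  have "det M \<noteq> 0"
  proof (rule det_nonzero_modp[OF Mc prp, where P="\<lambda>i. n \<in> f i"])
    fix i j assume i: "i < m" and j: "j < m" and ij: "i \<noteq> j" and np: "\<not> (n \<in> f i \<and> n \<notin> f j)"
    have e: "(f i - {n}) - f j = f i - f j" using np by auto
    have "(card (f i - f j) + s) mod p ^ k < d" using hz[OF fi[OF i] fi[OF j] finj[OF i j ij]] .
    hence "p dvd ((card (f i - f j) + s) choose d)" using dvd_choose_small_mod[OF pr _ dq] by blast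
    hence "int p dvd int ((card (f i - f j) + s) choose d)" by simp
    thus "int p dvd M $$ (i, j)" using i j e unfolding M_def by simp
  next
    fix i assume i: "i < m"
    have "\<not> int p dvd int (s choose d)" using nd by simp
    moreover have "card (f i - {n} - f i) = 0"
    proof -
      have "f i - {n} - f i = {}" by blast
      thus ?thesis by (simp only: card.empty)
    qed
    ultimately show "\<not> int p dvd M $$ (i, i)" using i unfolding M_def by simp
  qed
  thus False using d0 by simp
qed



lemma interval_good:
  fixes n p k q s d :: nat
  assumes n0: "n > 0" and pr: "prime p" and q: "q = p ^ k"
    and sq: "s < q" and nd: "\<not> p dvd (s choose d)" and d1: "1 \<le> d"
  shows "is_interval {q - s..q - s + d - 1} \<and> {q - s..q - s + d - 1} \<subseteq> {1..q - 1} \<and>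
            (\<forall>F. F \<subseteq> Pow {1..n} \<and> modular_L_differencing_Sperner q {q - s..q - s + d - 1} F \<longrightarrow>
                 card F \<le> (\<Sum>i=0..card {q - s..q - s + d - 1}. (n - 1) choose i))"
proof -
  have ds: "d \<le> s"
  proof (rule ccontr)
    assume "\<not> d \<le> s"
    hence z: "s choose d = 0" by (simp add: binomial_eq_0)
    have "p dvd (s choose d)" unfolding z by simp
    thus False using nd by simp
  qed
  define a where "a = q - s"
  define b where "b = q - s + d - 1"
  have a1: "1 \<le> a" using sq a_def by simp
  have ab: "a \<le> b" using d1 a_def b_def by simp
  have bq: "b \<le> q - 1" using ds sq b_def by simp
  have cL: "card {a..b} = d" using ab d1 a_def b_def by simp
  have dq: "d < q" using ds sq by simp
  have "\<forall>F. F \<subseteq> Pow {1..n} \<and> modular_L_differencing_Sperner q {a..b} F \<longrightarrow>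
                 card F \<le> (\<Sum>i=0..card {a..b}. (n - 1) choose i)"
  proof (intro allI impI)
    fix F assume F: "F \<subseteq> Pow {1..n} \<and> modular_L_differencing_Sperner q {a..b} F"
    have "card F \<le> (\<Sum>i=0..d. (n - 1) choose i)"
    proof (rule core[OF pr n0 conjunct1[OF F], where k=k and s=s])
      fix A B assume A: "A \<in> F" and B: "B \<in> F" and AB: "A \<noteq> B"
      obtain l where l: "l \<in> {a..b}" and lm: "card (A - B) mod q = l mod q"
        using F A B AB unfolding modular_L_differencing_Sperner_def by blast
      have lq: "l < q" using l bq a1 by auto
      have "(card (A - B) + s) mod q = (card (A - B) mod q + s) mod q" by (simp add: mod_add_left_eq)
      also have "\<dots> = (l + s) mod q" using lm lq by simp
      also have "l + s = (l - a) + q" using l a_def sq by auto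
      also have "(l - a + q) mod q = l - a" using lq by simp
      also have "l - a < d" using l ab a_def b_def d1 by auto
      finally show "(card (A - B) + s) mod p ^ k < d" using q by simp
    next
      show "d < p ^ k" using dq q by simp
    qed (rule nd)
    thus "card F \<le> (\<Sum>i=0..card {a..b}. (n - 1) choose i)" using cL by simp
  qed
  moreover have "is_interval {a..b}" unfolding is_interval_def using ab by blast
  moreover have "{a..b} \<subseteq> {1..q-1}" using a1 bq by auto
  ultimately show ?thesis unfolding a_def b_def by blast
qed

lemma Icc_inj_aux:
  fixes a b c e :: nat
  assumes "{a..b} = {c..e}" "a \<le> b"
  shows "a = c \<and> b = e"
  using assms by (simp add: Icc_eq_Icc)

theorem mainTheorem13:
  fixes n p k q :: nat
  assumes "n > 0" and "prime p" and "k \<ge> 2" and "q = p ^ k"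
  shows "real (card {L. is_interval L \<and> L \<subseteq> {1..q - 1} \<and>
            (\<forall>F. F \<subseteq> Pow {1..n} \<and> modular_L_differencing_Sperner q L F \<longrightarrow>
                 card F \<le> (\<Sum>i=0..card L. (n - 1) choose i))})
         \<ge> real p ^ k * (real p - 1) ^ k / 2 ^ k - real q"
proof -
  note n0 = assms(1) and pr = assms(2) and q = assms(4)
  define T where "T = {L. is_interval L \<and> L \<subseteq> {1..q - 1} \<and>
            (\<forall>F. F \<subseteq> Pow {1..n} \<and> modular_L_differencing_Sperner q L F \<longrightarrow>
                 card F \<le> (\<Sum>i=0..card L. (n - 1) choose i))}"
  define G1 where "G1 = {x \<in> Good p k. 1 \<le> snd x}"
  define \<phi> where "\<phi> = (\<lambda>(s,d). {q - s..q - s + d - 1})"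
  have finT: "finite T"
  proof (rule finite_subset)
    show "T \<subseteq> Pow {1..q-1}" unfolding T_def by auto
  qed simp
  have sub: "\<phi> ` G1 \<subseteq> T"
  proof
    fix L assume "L \<in> \<phi> ` G1"
    then obtain s d where sd: "(s,d) \<in> G1" and L: "L = {q - s..q - s + d - 1}"
      unfolding \<phi>_def by auto
    have "s < q" "\<not> p dvd (s choose d)" "1 \<le> d" using sd q unfolding G1_def Good_def by auto
    from interval_good[OF n0 pr q this] show "L \<in> T" unfolding T_def L by blast
  qed
  have inj: "inj_on \<phi> G1"
  proof (rule inj_onI)
    fix x y assume x: "x \<in> G1" and y: "y \<in> G1" and e: "\<phi> x = \<phi> y"
    obtain s d where xx: "x = (s,d)" by (cases x)
    obtain t c where yy: "y = (t,c)" by (cases y)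
    have h: "s < q" "1 \<le> d" "t < q" "1 \<le> c" using x y xx yy q unfolding G1_def Good_def by auto
    have "{q - s..q - s + d - 1} = {q - t..q - t + c - 1}" using e xx yy unfolding \<phi>_def by simp
    moreover have "q - s \<le> q - s + d - 1" using h by simp
    ultimately have "q - s = q - t \<and> q - s + d - 1 = q - t + c - 1" by (rule Icc_inj_aux)
    hence "s = t" "d = c" using h by auto
    thus "x = y" using xx yy by simp
  qed
  have c1: "card G1 \<le> card T" using card_image[OF inj] card_mono[OF finT sub] by simp
  have finG1: "finite G1" unfolding G1_def using Good_finite by simp
  have "Good p k \<subseteq> G1 \<union> ({..<q} \<times> {0})"
    unfolding G1_def Good_def using q by auto
  hence "card (Good p k) \<le> card (G1 \<union> ({..<q} \<times> {0}))"
    by (rule card_mono[rotated]) (simp add: finG1)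
  also have "\<dots> \<le> card G1 + card ({..<q} \<times> {0::nat})" by (rule card_Un_le)
  also have "card ({..<q} \<times> {0::nat}) = q" by (simp add: card_cartesian_product)
  finally have c2: "card (Good p k) \<le> card G1 + q" .
  have c3: "card (Dig p) ^ k \<le> card (Good p k)" by (rule card_Good[OF pr])
  have e: "real (card (Dig p)) = real p * (real p - 1) / 2"
  proof -
    have "real (2 * card (Dig p)) = real (p * (p - 1))" using card_Dig by metis
    moreover have "p \<ge> 1" using pr prime_gt_0_nat by (simp add: Suc_leI)
    ultimately show ?thesis by (simp add: of_nat_diff)
  qed
  have "real (card (Dig p)) ^ k = (real p * (real p - 1) / 2) ^ k" by (simp only: e)
  also have "\<dots> = real p ^ k * (real p - 1) ^ k / 2 ^ k"
    by (simp only: power_divide power_mult_distrib)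
  finally have "real (card (Dig p)) ^ k = real p ^ k * (real p - 1) ^ k / 2 ^ k" .
  moreover have "real (card (Dig p)) ^ k \<le> real (card T) + real q"
  proof -
    have "card (Dig p) ^ k \<le> card T + q" using c1 c2 c3 by linarith
    hence "real (card (Dig p) ^ k) \<le> real (card T + q)" by (simp only: of_nat_le_iff)
    thus ?thesis by simp
  qed
  ultimately show ?thesis unfolding T_def by linarith
qed

end
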